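(* Let $f(z)=e^z$, let $z_0\in\mathbb{C}$ satisfy $f^n(z_0)\to\infty$, set $z_n=f^n(z_0)$ and $D_n=D_{2\pi}(z_n)$ for $n\geq1$. Then there exist $n_0\in\mathbb{N}$ and holomorphic maps $\phi_n\colon D_n\to\mathbb{C}$, $n\geq n_0$, such that: (a) $\phi_n(z_n)=z_0$; (b) $f^n(\phi_n(z))=z$ for all $z\in D_n$; (c) $\sup_{z\in D_n}|\phi_n'(z)|\to0$ as $n\to\infty$; (d) $\mathrm{diam}(\phi_n(D_n))\to0$ as $n\to\infty$.
   Context: $D_r(w)$ denotes the open Euclidean disc of radius $r$ centred at $w$; $f^n$ is the $n$-th iterate. *)

theory Defs
  imports "HOL-Analysis.Analysis"
begin

end

theory Submission
  imports Defs "HOL-Complex_Analysis.Complex_Analysis"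
begin

definition Lb :: "complex \<Rightarrow> nat \<Rightarrow> complex \<Rightarrow> complex" where
  "Lb z0 k z = (exp^^k) z0 + Ln (z / (exp^^Suc k) z0)"

lemma Lb_deriv:
  assumes c: "norm ((exp^^Suc k) z0) \<ge> 4*pi" and z: "z \<in> ball ((exp^^Suc k) z0) (2*pi)"
  shows "(Lb z0 k has_field_derivative 1/z) (at z)" "norm (1/z) \<le> 1/2" "exp (Lb z0 k z) = z"
proof -
  define c where "c = (exp^^Suc k) z0"
  have cexp: "c = exp ((exp^^k) z0)" by (simp add: c_def)
  have cnz: "c \<noteq> 0" by (simp add: cexp)
  have d: "norm (z - c) < 2*pi" using z by (simp add: c_def dist_norm norm_minus_commute)
  have cc: "norm c \<ge> 4*pi" using assms by (simp add: c_def)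
  have zn: "norm z > 2*pi" using norm_triangle_ineq2[of c "c - z"] d cc
    by (simp add: norm_minus_commute)
  then have znz: "z \<noteq> 0" using pi_gt_zero by auto
  have "norm (z/c - 1) = norm (z - c) / norm c" using cnz
    by (metis norm_divide diff_divide_distrib divide_self)
  also have "\<dots> < 1/2" using d cc pi_gt_zero by (simp add: divide_simps)
  finally have t: "norm (z/c - 1) < 1/2" .
  have "Re (z/c) > 0"
  proof -
    have "\<bar>Re (z/c - 1)\<bar> < 1/2" using t abs_Re_le_cmod[of "z/c - 1"] by linarith
    moreover have "\<And>r::real. \<bar>r - 1\<bar> < 1/2 \<Longrightarrow> r > 0" by arith
    ultimately show ?thesis by (metis minus_complex.sel one_complex.sel)
  qed
  then have nn: "z/c \<notin> \<real>\<^sub>\<le>\<^sub>0" by (metis complex_nonpos_Reals_iff not_less)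
  have h1: "((\<lambda>w. w/c) has_field_derivative 1/c) (at z)"
    using cnz by (auto intro!: derivative_eq_intros)
  have h2: "((\<lambda>w. Ln (w/c)) has_field_derivative inverse (z/c) * (1/c)) (at z)"
    using DERIV_chain2[OF has_field_derivative_Ln[OF nn] h1] .
  have "((\<lambda>z. (exp^^k) z0 + Ln (z / c)) has_field_derivative 0 + inverse (z/c) * (1/c)) (at z)"
    by (intro DERIV_add h2 DERIV_const)
  moreover have "0 + inverse (z/c) * (1/c) = 1/z" using cnz znz by (simp add: field_simps)
  ultimately show "(Lb z0 k has_field_derivative 1/z) (at z)"
    unfolding Lb_def[abs_def] c_def by simp
  show "norm (1/z) \<le> 1/2" using zn pi_gt3 by (simp add: norm_divide divide_simps)
  have "exp (Lb z0 k z) = c * (z / c)"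
    using nn cnz znz by (simp add: Lb_def exp_add cexp[symmetric] c_def[symmetric])
  then show "exp (Lb z0 k z) = z" using cnz by simp
qed

lemma Lb_center: "Lb z0 k ((exp^^Suc k) z0) = (exp^^k) z0"
proof -
  have "(exp^^Suc k) z0 \<noteq> 0" by simp
  then show ?thesis by (simp add: Lb_def)
qed

lemma Lb_ball:
  assumes c: "norm ((exp^^Suc k) z0) \<ge> 4*pi" and z: "z \<in> ball ((exp^^Suc k) z0) (2*pi)"
  shows "norm (Lb z0 k z - (exp^^k) z0) \<le> 1/2 * norm (z - (exp^^Suc k) z0)"
        "Lb z0 k z \<in> ball ((exp^^k) z0) (2*pi)"
proof -
  have "norm (Lb z0 k z - Lb z0 k ((exp^^Suc k) z0)) \<le> 1/2 * norm (z - (exp^^Suc k) z0)"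
    apply (rule field_differentiable_bound[where S="ball ((exp^^Suc k) z0) (2*pi)" and f' ="\<lambda>z. 1/z"])
    using Lb_deriv[OF c] z pi_gt_zero by (auto intro: has_field_derivative_at_within)
  then show *: "norm (Lb z0 k z - (exp^^k) z0) \<le> 1/2 * norm (z - (exp^^Suc k) z0)"
    unfolding Lb_center .
  have "norm (z - (exp^^Suc k) z0) < 2*pi" using z by (simp add: dist_norm norm_minus_commute)
  then show "Lb z0 k z \<in> ball ((exp^^k) z0) (2*pi)"
    using * pi_gt_zero norm_minus_commute[of "(exp^^k) z0" "Lb z0 k z"]
    by (simp add: dist_norm del: funpow.simps) (use pi_gt_zero in linarith)
qed

primrec Gb :: "complex \<Rightarrow> nat \<Rightarrow> nat \<Rightarrow> complex \<Rightarrow> complex" where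
  "Gb z0 N 0 = (\<lambda>z. z)"
| "Gb z0 N (Suc m) = (\<lambda>z. Gb z0 N m (Lb z0 (N+m) z))"

lemma Gb_props:
  assumes big: "\<And>k. k \<ge> N \<Longrightarrow> norm ((exp^^k) z0) \<ge> 4*pi"
  shows "\<exists>G'. (\<forall>z\<in>ball ((exp^^(N+m)) z0) (2*pi).
            (Gb z0 N m has_field_derivative G' z) (at z) \<and> norm (G' z) \<le> (1/2)^m
            \<and> (exp^^m) (Gb z0 N m z) = z)
          \<and> Gb z0 N m ((exp^^(N+m)) z0) = (exp^^N) z0"
proof (induction m)
  case 0
  show ?case by (rule exI[of _ "\<lambda>z. 1"]) auto
next
  case (Suc m)
  then obtain G' where G': "\<And>z. z\<in>ball ((exp^^(N+m)) z0) (2*pi) \<Longrightarrow>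
            (Gb z0 N m has_field_derivative G' z) (at z) \<and> norm (G' z) \<le> (1/2)^m
            \<and> (exp^^m) (Gb z0 N m z) = z"
     and c: "Gb z0 N m ((exp^^(N+m)) z0) = (exp^^N) z0" by blast
  have bg: "norm ((exp^^Suc (N+m)) z0) \<ge> 4*pi" using big[of "Suc (N+m)"] by simp
  show ?case
  proof (intro exI[of _ "\<lambda>z. G' (Lb z0 (N+m) z) * (1/z)"] conjI ballI)
    fix z assume z: "z \<in> ball ((exp^^(N+Suc m)) z0) (2*pi)"
    then have z': "z \<in> ball ((exp^^Suc (N+m)) z0) (2*pi)" by simp
    have L: "Lb z0 (N+m) z \<in> ball ((exp^^(N+m)) z0) (2*pi)" using Lb_ball(2)[OF bg z'] .
    note D = Lb_deriv[OF bg z']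
    note GL = G'[OF L]
    show "(Gb z0 N (Suc m) has_field_derivative G' (Lb z0 (N+m) z) * (1/z)) (at z)"
      using DERIV_chain2[of "Gb z0 N m" "G' (Lb z0 (N+m) z)" "Lb z0 (N+m)" z "1/z" UNIV] GL D(1)
      by simp
    have "norm (G' (Lb z0 (N+m) z) * (1/z)) \<le> (1/2)^m * (1/2)"
      unfolding norm_mult using GL D(2) by (intro mult_mono) auto
    then show "norm (G' (Lb z0 (N+m) z) * (1/z)) \<le> (1/2)^Suc m" by simp
    show "(exp^^Suc m) (Gb z0 N (Suc m) z) = z"
      using GL D(3) by simp
  next
    show "Gb z0 N (Suc m) ((exp^^(N+Suc m)) z0) = (exp^^N) z0"
      using c Lb_center[of z0 "N+m"] by simp
  qed
qed

lemma iter_exp_deriv: "\<exists>D. \<forall>z. (((exp::complex\<Rightarrow>complex)^^n) has_field_derivative D z) (at z) \<and> D z \<noteq> 0"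
proof (induction n)
  case 0
  show ?case by (rule exI[of _ "\<lambda>z. 1"]) (auto intro: derivative_eq_intros)
next
  case (Suc n)
  then obtain D where D: "\<And>z. (((exp::complex\<Rightarrow>complex)^^n) has_field_derivative D z) (at z) \<and> D z \<noteq> 0" by blast
  show ?case
  proof (intro exI[of _ "\<lambda>z. exp ((exp^^n) z) * D z"] allI conjI)
    fix z
    show "((exp^^Suc n) has_field_derivative exp ((exp^^n) z) * D z) (at z)"
      using DERIV_chain2[OF DERIV_exp, of "exp^^n" "D z" z UNIV] D[of z] by (simp add: o_def)
    show "exp ((exp^^n) z) * D z \<noteq> 0" using D[of z] by simp
  qed
qed

lemma iter_exp_holo: "((exp::complex\<Rightarrow>complex)^^n) holomorphic_on S"
proof -
  obtain D where D: "\<And>z. (((exp::complex\<Rightarrow>complex)^^n) has_field_derivative D z) (at z) \<and> D z \<noteq> 0"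
    using iter_exp_deriv by blast
  then show ?thesis unfolding holomorphic_on_def field_differentiable_def
    by (meson has_field_derivative_at_within)
qed

lemma iter_exp_deriv_nz: "deriv ((exp::complex\<Rightarrow>complex)^^n) z \<noteq> 0"
proof -
  obtain D where D: "\<And>z. (((exp::complex\<Rightarrow>complex)^^n) has_field_derivative D z) (at z) \<and> D z \<noteq> 0"
    using iter_exp_deriv by blast
  then show ?thesis using DERIV_imp_deriv by metis
qed

lemma local_inv:
  obtains r H M where "r > 0" "H holomorphic_on ball ((exp^^N) z0) r" "H ((exp^^N) z0) = z0"
    "\<And>w. w \<in> ball ((exp^^N) z0) r \<Longrightarrow> (exp^^N) (H w) = w"
    "\<And>w. w \<in> ball ((exp^^N) z0) r \<Longrightarrow> norm (deriv H w) \<le> M"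
proof -
  obtain r0 where r0: "r0 > 0" "open ((exp^^N) ` ball z0 r0)" "inj_on (exp^^N) (ball z0 r0)"
    using has_complex_derivative_locally_invertible[OF iter_exp_holo[of N UNIV], of z0]
      iter_exp_deriv_nz by auto
  define V where "V = (exp^^N) ` ball z0 r0"
  obtain g where g: "g holomorphic_on V" "\<And>z. z \<in> ball z0 r0 \<Longrightarrow> g ((exp^^N) z) = z"
    using holomorphic_has_inverse[OF iter_exp_holo open_ball r0(3)] unfolding V_def by metis
  have zV: "(exp^^N) z0 \<in> V" using r0 by (simp add: V_def)
  obtain r1 where r1: "r1 > 0" "ball ((exp^^N) z0) r1 \<subseteq> V"
    using r0(2) zV unfolding V_def[symmetric] by (meson openE)
  define r where "r = r1/2"
  have cb: "cball ((exp^^N) z0) r \<subseteq> V" using r1 by (auto simp: r_def)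
  have "continuous_on V (deriv g)"
    using g(1) r0(2) unfolding V_def[symmetric]
    by (simp add: holomorphic_deriv holomorphic_on_imp_continuous_on)
  then have "compact (deriv g ` cball ((exp^^N) z0) r)"
    using cb by (meson compact_cball compact_continuous_image continuous_on_subset)
  then obtain M where M: "\<And>w. w \<in> cball ((exp^^N) z0) r \<Longrightarrow> norm (deriv g w) \<le> M"
    using compact_imp_bounded bounded_iff by (metis imageI)
  have inv: "(exp^^N) (g w) = w" if "w \<in> V" for w
    using that g(2) unfolding V_def by auto
  show ?thesis
  proof (rule that[of r g M])
    show "r > 0" using r1 by (simp add: r_def)
    show "g holomorphic_on ball ((exp^^N) z0) r"
      using g(1) cb by (meson ball_subset_cball holomorphic_on_subset order_trans)
    show "g ((exp^^N) z0) = z0" using g(2) r0 by simp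
    show "(exp^^N) (g w) = w" if "w \<in> ball ((exp^^N) z0) r" for w
    proof -
      have "w \<in> V" using that cb by auto
      then show ?thesis by (rule inv)
    qed
    show "norm (deriv g w) \<le> M" if "w \<in> ball ((exp^^N) z0) r" for w
      using M that by auto
  qed
qed

theorem mainTheorem10:
  fixes z0 :: complex
  assumes esc: "filterlim (\<lambda>n. (exp ^^ n) z0) at_infinity sequentially"
  shows "\<exists>(n0::nat) (\<phi> :: nat \<Rightarrow> complex \<Rightarrow> complex).
    (\<forall>n\<ge>n0. \<phi> n holomorphic_on ball ((exp ^^ n) z0) (2 * pi)) \<and>
    (\<forall>n\<ge>n0. \<phi> n ((exp ^^ n) z0) = z0) \<and>
    (\<forall>n\<ge>n0. \<forall>z\<in>ball ((exp ^^ n) z0) (2 * pi). (exp ^^ n) (\<phi> n z) = z) \<and>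
    (\<forall>\<epsilon>>0. \<forall>\<^sub>F n in sequentially.
        \<forall>z\<in>ball ((exp ^^ n) z0) (2 * pi). norm (deriv (\<phi> n) z) \<le> \<epsilon>) \<and>
    (\<forall>\<epsilon>>0. \<forall>\<^sub>F n in sequentially.
        bounded (\<phi> n ` ball ((exp ^^ n) z0) (2 * pi)) \<and>
        diameter (\<phi> n ` ball ((exp ^^ n) z0) (2 * pi)) \<le> \<epsilon>)"
proof -
  obtain N where N: "\<And>k. k \<ge> N \<Longrightarrow> 4*pi \<le> norm ((exp^^k) z0)"
    using esc unfolding filterlim_at_infinity[OF order_refl] eventually_sequentially
    by (metis pi_gt_zero mult_pos_pos zero_less_numeral)
  obtain r H M where r: "r > 0" and Hh: "H holomorphic_on ball ((exp^^N) z0) r"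
    and Hc: "H ((exp^^N) z0) = z0"
    and Hi: "\<And>w. w \<in> ball ((exp^^N) z0) r \<Longrightarrow> (exp^^N) (H w) = w"
    and HM: "\<And>w. w \<in> ball ((exp^^N) z0) r \<Longrightarrow> norm (deriv H w) \<le> M"
    using local_inv[of N z0] by metis
  have M0: "0 \<le> M" using HM[of "(exp^^N) z0"] r by (meson centre_in_ball norm_ge_zero order_trans)
  have GD: "(Gb z0 N m has_field_derivative deriv (Gb z0 N m) z) (at z)
      \<and> norm (deriv (Gb z0 N m) z) \<le> (1/2)^m \<and> (exp^^m) (Gb z0 N m z) = z"
    if "z \<in> ball ((exp^^(N+m)) z0) (2*pi)" for m z
  proof -
    obtain G' where G': "\<forall>z\<in>ball ((exp^^(N+m)) z0) (2*pi).
            (Gb z0 N m has_field_derivative G' z) (at z) \<and> norm (G' z) \<le> (1/2)^m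
            \<and> (exp^^m) (Gb z0 N m z) = z"
      using Gb_props[of N z0 m] N by blast
    then show ?thesis using that DERIV_imp_deriv by metis
  qed
  have Gc: "Gb z0 N m ((exp^^(N+m)) z0) = (exp^^N) z0" for m
    using Gb_props[of N z0 m] N by blast
  have Gball: "norm (Gb z0 N m z - (exp^^N) z0) < (1/2)^m * (2*pi)"
    if z: "z \<in> ball ((exp^^(N+m)) z0) (2*pi)" for m z
  proof -
    have "norm (Gb z0 N m z - Gb z0 N m ((exp^^(N+m)) z0)) \<le> (1/2)^m * norm (z - (exp^^(N+m)) z0)"
      apply (rule field_differentiable_bound[where S="ball ((exp^^(N+m)) z0) (2*pi)" and f' ="deriv (Gb z0 N m)"])
      using GD z pi_gt_zero by (auto intro: has_field_derivative_at_within)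
    also have "\<dots> < (1/2)^m * (2*pi)"
      using z by (intro mult_strict_left_mono) (auto simp: dist_norm norm_minus_commute)
    finally show ?thesis unfolding Gc .
  qed
  obtain m0 where m0: "(1/2::real)^m0 < r / (2*pi)"
    using real_arch_pow_inv[of "r/(2*pi)" "1/2::real"] r pi_gt_zero by auto
  define n0 where "n0 = N + m0"
  define \<phi> where "\<phi> = (\<lambda>n z. H (Gb z0 N (n - N) z))"
  have inr: "Gb z0 N (n - N) z \<in> ball ((exp^^N) z0) r"
    if n: "n \<ge> n0" and z: "z \<in> ball ((exp^^n) z0) (2*pi)" for n z
  proof -
    have nn: "n = N + (n - N)" using n by (simp add: n0_def)
    have "norm (Gb z0 N (n-N) z - (exp^^N) z0) < (1/2)^(n-N) * (2*pi)"
      using Gball[of z "n-N"] z nn by simp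
    also have "\<dots> \<le> (1/2)^m0 * (2*pi)"
      using n by (intro mult_right_mono power_decreasing) (auto simp: n0_def)
    also have "\<dots> < r" using m0 pi_gt_zero by (simp add: field_simps)
    finally show ?thesis by (simp add: dist_norm norm_minus_commute)
  qed
  have PD: "(\<phi> n has_field_derivative deriv H (Gb z0 N (n - N) z) * deriv (Gb z0 N (n-N)) z) (at z)
      \<and> norm (deriv H (Gb z0 N (n - N) z) * deriv (Gb z0 N (n-N)) z) \<le> M * (1/2)^(n-N)"
    if n: "n \<ge> n0" and z: "z \<in> ball ((exp^^n) z0) (2*pi)" for n z
  proof -
    have nn: "n = N + (n - N)" using n by (simp add: n0_def)
    have g: "(Gb z0 N (n-N) has_field_derivative deriv (Gb z0 N (n-N)) z) (at z)"
         "norm (deriv (Gb z0 N (n-N)) z) \<le> (1/2)^(n-N)"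
      using GD[of z "n-N"] z nn by auto
    have h: "(H has_field_derivative deriv H (Gb z0 N (n - N) z)) (at (Gb z0 N (n - N) z))"
      using holomorphic_derivI[OF Hh open_ball inr[OF n z]] .
    show ?thesis
    proof
      show "(\<phi> n has_field_derivative deriv H (Gb z0 N (n - N) z) * deriv (Gb z0 N (n-N)) z) (at z)"
        unfolding \<phi>_def using DERIV_chain2[OF h g(1)] by simp
      show "norm (deriv H (Gb z0 N (n - N) z) * deriv (Gb z0 N (n-N)) z) \<le> M * (1/2)^(n-N)"
        unfolding norm_mult using HM[OF inr[OF n z]] g(2) M0 by (intro mult_mono) auto
    qed
  qed
  have Lip: "norm (\<phi> n z - \<phi> n w) \<le> M * (1/2)^(n-N) * norm (z - w)"
    if n: "n \<ge> n0" and z: "z \<in> ball ((exp^^n) z0) (2*pi)" and w: "w \<in> ball ((exp^^n) z0) (2*pi)" for n z w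
    apply (rule field_differentiable_bound[where S="ball ((exp^^n) z0) (2*pi)"
          and f' ="\<lambda>z. deriv H (Gb z0 N (n - N) z) * deriv (Gb z0 N (n-N)) z"])
    using PD[OF n] z w by (auto intro: has_field_derivative_at_within)
  have ev: "\<exists>K. \<forall>n\<ge>K. n \<ge> n0 \<and> M * (1/2)^(n-N) \<le> \<delta>" if dpos: "\<delta> > 0" for \<delta>
  proof -
    obtain m1 where m1: "(1/2::real)^m1 < \<delta> / (M+1)"
      using real_arch_pow_inv[of "\<delta>/(M+1)" "1/2::real"] dpos M0 by auto
    have "M * (1/2)^(n-N) \<le> \<delta>" if "n \<ge> N + m1" for n
    proof -
      have "M * (1/2)^(n-N) \<le> (M+1) * (1/2::real)^m1"
        using that M0 by (intro mult_mono power_decreasing) auto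
      also have "\<dots> \<le> \<delta>" using m1 M0 by (simp add: field_simps)
      finally show ?thesis .
    qed
    then show ?thesis by (intro exI[of _ "N + m1 + n0"]) auto
  qed
  show ?thesis
  proof (intro exI[of _ n0] exI[of _ \<phi>] conjI allI impI ballI)
    fix n assume n: "n \<ge> n0"
    show "\<phi> n holomorphic_on ball ((exp ^^ n) z0) (2 * pi)"
      unfolding holomorphic_on_def field_differentiable_def
      using PD[OF n] by (meson has_field_derivative_at_within)
    have nn: "n = N + (n - N)" using n by (simp add: n0_def)
    show "\<phi> n ((exp ^^ n) z0) = z0"
      unfolding \<phi>_def using Gc[of "n-N"] nn Hc by simp
    fix z assume z: "z \<in> ball ((exp ^^ n) z0) (2 * pi)"
    have "(exp ^^ n) (\<phi> n z) = (exp^^(n-N)) ((exp^^N) (H (Gb z0 N (n - N) z)))"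
      unfolding \<phi>_def by (subst nn) (simp add: funpow_add add.commute[of N])
    also have "\<dots> = (exp^^(n-N)) (Gb z0 N (n - N) z)" using Hi[OF inr[OF n z]] by simp
    also have "\<dots> = z" using GD[of z "n-N"] z nn by auto
    finally show "(exp ^^ n) (\<phi> n z) = z" .
  next
    fix \<epsilon> :: real assume e: "\<epsilon> > 0"
    obtain K where K: "\<And>n. n \<ge> K \<Longrightarrow> n \<ge> n0 \<and> M * (1/2)^(n-N) \<le> \<epsilon>" using ev[OF e] by blast
    show "\<forall>\<^sub>F n in sequentially. \<forall>z\<in>ball ((exp ^^ n) z0) (2 * pi). norm (deriv (\<phi> n) z) \<le> \<epsilon>"
      unfolding eventually_sequentially
    proof (intro exI[of _ K] allI impI ballI)
      fix n z assume n: "n \<ge> K" and z: "z \<in> ball ((exp ^^ n) z0) (2 * pi)"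
      have "deriv (\<phi> n) z = deriv H (Gb z0 N (n - N) z) * deriv (Gb z0 N (n-N)) z"
        using PD[of n z] K[OF n] z DERIV_imp_deriv by blast
      then show "norm (deriv (\<phi> n) z) \<le> \<epsilon>" using PD[of n z] K[OF n] z by auto
    qed
  next
    fix \<epsilon> :: real assume e: "\<epsilon> > 0"
    have e': "\<epsilon> / (4*pi) > 0" using e pi_gt_zero by simp
    obtain K where K: "\<And>n. n \<ge> K \<Longrightarrow> n \<ge> n0 \<and> M * (1/2)^(n-N) \<le> \<epsilon> / (4*pi)"
      using ev[OF e'] by blast
    show "\<forall>\<^sub>F n in sequentially. bounded (\<phi> n ` ball ((exp ^^ n) z0) (2 * pi)) \<and>
        diameter (\<phi> n ` ball ((exp ^^ n) z0) (2 * pi)) \<le> \<epsilon>"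
      unfolding eventually_sequentially
    proof (intro exI[of _ K] allI impI conjI)
      fix n assume n: "n \<ge> K"
      have n0: "n \<ge> n0" and B: "M * (1/2)^(n-N) \<le> \<epsilon> / (4*pi)" using K[OF n] by auto
      have dd: "norm (\<phi> n z - \<phi> n w) \<le> \<epsilon>"
        if z: "z \<in> ball ((exp^^n) z0) (2*pi)" and w: "w \<in> ball ((exp^^n) z0) (2*pi)" for z w
      proof -
        have "norm (z - w) \<le> 4*pi"
          using z w dist_triangle_less_add[of z "(exp^^n) z0" "2*pi" w "2*pi"]
          by (auto simp: dist_norm norm_minus_commute dist_commute)
        then have "M * (1/2)^(n-N) * norm (z - w) \<le> \<epsilon> / (4*pi) * (4*pi)"
          using B M0 e' by (intro mult_mono) auto
        also have "\<dots> = \<epsilon>" using pi_gt_zero by simp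
        finally show ?thesis using Lip[OF n0 z w] by linarith
      qed
      have c: "(exp^^n) z0 \<in> ball ((exp^^n) z0) (2*pi)" using pi_gt_zero by simp
      have "\<phi> n ` ball ((exp ^^ n) z0) (2 * pi) \<subseteq> cball (\<phi> n ((exp^^n) z0)) \<epsilon>"
        using dd[OF c] by (auto simp: dist_norm)
      then show "bounded (\<phi> n ` ball ((exp ^^ n) z0) (2 * pi))"
        using bounded_cball bounded_subset by blast
      show "diameter (\<phi> n ` ball ((exp ^^ n) z0) (2 * pi)) \<le> \<epsilon>"
        using dd e by (intro diameter_le) auto
    qed
  qed
qed

end
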